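(* Let $d>1$ and let $f\colon[0,1]^{d-1}\times[0,1]\to[0,\infty)$ be a continuous conditional density, i.e. $f$ is continuous and $\int_0^1 f(x,y)\,dy=1$ for every $x\in[0,1]^{d-1}$. Then for every $\epsilon>0$ there exists a (unit-integral-normalized) SPICE model $\hat f_\theta(y\mid x)$ such that $\sup_{(x,y)\in[0,1]^d}|f(x,y)-\hat f_\theta(y\mid x)|<\epsilon$.
   Context: A SPICE model of degree $n\ge 1$ with $K$ knots: a neural network maps $x\in[0,1]^{d-1}$ to sorted knot positions $0=t_1\le\dots\le t_K=1$ and heights. On each $[t_i,t_{i+1}]$, with points $\tau_i^j=t_i+(j-1)\frac{t_{i+1}-t_i}{n}$ ($j=1,\dots,n+1$) and heights $h_i^j$ (endpoint heights shared between consecutive pieces and positive, intermediate heights arbitrary reals), $p_i$ is the degree-$\le n$ Lagrange interpolating polynomial of $\{(\tau_i^j,h_i^j)\}_j$ and $\bar p_i=\max(p_i,0)$. The normalized SPICE density is $\hat f_\theta(y\mid x)=\bar p_\ell(y)\big/\sum_{i=1}^{K-1}\int_{t_i}^{t_{i+1}}\bar p_i(y')\,dy'$, where $t_\ell\le y<t_{\ell+1}$ (last piece at $y=1$), all parameters being the network outputs at $x$. The un-normalized model is $\bar p_\ell(y)$ without the division. *)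

theory Defs
  imports "HOL-Analysis.Analysis"
begin

definition relu :: "real \<Rightarrow> real" where
  "relu z = max 0 z"

definition affine_layer :: "real list list \<Rightarrow> real list \<Rightarrow> real list \<Rightarrow> real list" where
  "affine_layer W b v = map2 (\<lambda>row c. sum_list (map2 (*) row v) + c) W b"

fun nn_rest :: "(real list list \<times> real list) list \<Rightarrow> real list \<Rightarrow> real list" where
  "nn_rest [] v = v"
| "nn_rest ((W, b) # Ls) v = nn_rest Ls (affine_layer W b (map relu v))"

text \<open>A network = first affine layer (acting on the input vector) followed by
  further layers, each preceded by a ReLU activation; the output is affine.\<close>
type_synonym 'n network = "((real^'n) \<times> real) list \<times> (real list list \<times> real list) list"

definition nn_eval :: "'n::finite network \<Rightarrow> real^'n \<Rightarrow> real list" where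
  "nn_eval N x = nn_rest (snd N) (map (\<lambda>(w, c). w \<bullet> x + c) (fst N))"

definition unit_cube :: "(real^'n::finite) set" where
  "unit_cube = {x. \<forall>i. 0 \<le> x $ i \<and> x $ i \<le> 1}"

text \<open>Conventions (0-indexed): degree n, K knots t 0 .. t (K-1), pieces i < K-1 on
  [t i, t (i+1)].
  Heights are stored globally: node j of piece i has height H (i*n+j), so endpoint heights
  H (i*n) are shared between consecutive pieces. The network output list is
  [t 0, ..., t (K-1), H 0, ..., H ((K-1)*n)].\<close>

definition spice_knot :: "nat \<Rightarrow> real list \<Rightarrow> nat \<Rightarrow> real" where
  "spice_knot K out i = out ! i"

definition spice_height :: "nat \<Rightarrow> real list \<Rightarrow> nat \<Rightarrow> real" where
  "spice_height K out g = out ! (K + g)"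

definition lagrange_interp :: "nat \<Rightarrow> (nat \<Rightarrow> real) \<Rightarrow> (nat \<Rightarrow> real) \<Rightarrow> real \<Rightarrow> real" where
  "lagrange_interp n xs ys y =
     (\<Sum>j\<le>n. ys j * (\<Prod>k\<in>{..n} - {j}. (y - xs k) / (xs j - xs k)))"

definition spice_poly :: "nat \<Rightarrow> (nat \<Rightarrow> real) \<Rightarrow> (nat \<Rightarrow> real) \<Rightarrow> nat \<Rightarrow> real \<Rightarrow> real" where
  "spice_poly n t H i y =
     lagrange_interp n (\<lambda>j. t i + real j * (t (Suc i) - t i) / real n) (\<lambda>j. H (i * n + j)) y"

definition spice_pbar :: "nat \<Rightarrow> (nat \<Rightarrow> real) \<Rightarrow> (nat \<Rightarrow> real) \<Rightarrow> nat \<Rightarrow> real \<Rightarrow> real" where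
  "spice_pbar n t H i y = max 0 (spice_poly n t H i y)"

text \<open>Index of the piece containing y: the largest i < K-1 with t i \<le> y
  (so t i \<le> y < t (i+1) for y < 1, and the last piece for y = 1).\<close>
definition spice_index :: "nat \<Rightarrow> (nat \<Rightarrow> real) \<Rightarrow> real \<Rightarrow> nat" where
  "spice_index K t y = Max {i. i < K - 1 \<and> t i \<le> y}"

definition spice_unnorm :: "nat \<Rightarrow> nat \<Rightarrow> (nat \<Rightarrow> real) \<Rightarrow> (nat \<Rightarrow> real) \<Rightarrow> real \<Rightarrow> real" where
  "spice_unnorm n K t H y = spice_pbar n t H (spice_index K t y) y"

definition spice_normalizer :: "nat \<Rightarrow> nat \<Rightarrow> (nat \<Rightarrow> real) \<Rightarrow> (nat \<Rightarrow> real) \<Rightarrow> real" where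
  "spice_normalizer n K t H = (\<Sum>i<K - 1. integral {t i..t (Suc i)} (spice_pbar n t H i))"

definition spice_density :: "nat \<Rightarrow> nat \<Rightarrow> 'n::finite network \<Rightarrow> real^'n \<Rightarrow> real \<Rightarrow> real" where
  "spice_density n K N x y =
     (let out = nn_eval N x; t = spice_knot K out; H = spice_height K out
      in spice_unnorm n K t H y / spice_normalizer n K t H)"

definition spice_net :: "nat \<Rightarrow> nat \<Rightarrow> 'n::finite network \<Rightarrow> bool" where
  "spice_net n K N \<longleftrightarrow> 1 \<le> n \<and> 2 \<le> K \<and>
     (\<forall>x \<in> unit_cube.
        let out = nn_eval N x; t = spice_knot K out; H = spice_height K out in
        length out = K + (K - 1) * n + 1 \<and>
        t 0 = 0 \<and> t (K - 1) = 1 \<and>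
        (\<forall>i < K - 1. t i \<le> t (Suc i)) \<and>
        (\<forall>i \<le> K - 1. H (i * n) > 0))"

end

theory Submission
  imports Defs
begin


definition coef :: "real list list \<Rightarrow> nat \<Rightarrow> nat \<Rightarrow> real" where
  "coef W j k = (if k < length (W!j) then W!j!k else 0)"

lemma sum_list_map2_mult:
  fixes r v :: "real list"
  shows "sum_list (map2 (*) r v) = (\<Sum>k<length v. (if k < length r then r!k else 0) * v!k)"
proof (induction r arbitrary: v)
  case Nil then show ?case by (auto intro: sum.neutral)
next
  case (Cons a r)
  then show ?case
  proof (cases v)
    case Nil then show ?thesis by simp
  next
    case (Cons b w)
    define g where "g = (\<lambda>k. (if k < length (a#r) then (a#r)!k else 0) * (b#w)!k)"
    have "(\<Sum>k<length (b#w). g k) = g 0 + (\<Sum>k<length w. g (Suc k))"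
      using sum.lessThan_Suc_shift[where n="length w" and g=g] by simp
    also have "(\<Sum>k<length w. g (Suc k)) = sum_list (map2 (*) r w)"
      unfolding Cons.IH[of w] g_def by (intro sum.cong refl) (auto simp: nth_Cons_Suc)
    finally show ?thesis unfolding Cons by (simp add: g_def)
  qed
qed

lemma length_affine_layer[simp]: "length (affine_layer W b v) = min (length W) (length b)"
  by (simp add: affine_layer_def)

lemma affine_layer_nth:
  "j < min (length W) (length b) \<Longrightarrow>
   affine_layer W b v ! j = (\<Sum>k<length v. coef W j k * v!k) + b!j"
  by (simp add: affine_layer_def sum_list_map2_mult coef_def)

lemma affine_layer_mk:
  assumes "length v = m"
  shows "affine_layer (map (\<lambda>j. map (R j) [0..<m]) [0..<p]) (map B [0..<p]) v
         = map (\<lambda>j. (\<Sum>k<m. R j k * v!k) + B j) [0..<p]"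
proof (rule nth_equalityI)
  fix j assume "j < length (affine_layer (map (\<lambda>j. map (R j) [0..<m]) [0..<p]) (map B [0..<p]) v)"
  then have j: "j < p" by simp
  show "affine_layer (map (\<lambda>j. map (R j) [0..<m]) [0..<p]) (map B [0..<p]) v ! j =
        map (\<lambda>j. (\<Sum>k<m. R j k * v!k) + B j) [0..<p] ! j"
    using j assms by (simp add: affine_layer_nth coef_def)
qed simp

lemma nn_rest_append: "nn_rest (Ls @ [(W,b)]) v = affine_layer W b (map relu (nn_rest Ls v))"
  by (induction Ls arbitrary: v) auto

definition netfund :: "nat \<Rightarrow> nat \<Rightarrow> (nat \<Rightarrow> real^'n::finite \<Rightarrow> real) \<Rightarrow> bool" where
  "netfund d m F \<longleftrightarrow> (\<exists>N::'n network. length (snd N) = d \<and> (\<forall>x. nn_eval N x = map (\<lambda>j. F j x) [0..<m]))"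

definition netfun :: "nat \<Rightarrow> (nat \<Rightarrow> real^'n::finite \<Rightarrow> real) \<Rightarrow> bool" where
  "netfun m F \<longleftrightarrow> (\<exists>N::'n network. \<forall>x. nn_eval N x = map (\<lambda>j. F j x) [0..<m])"

lemma netfun_iff: "netfun m F \<longleftrightarrow> (\<exists>d. netfund d m F)"
  unfolding netfun_def netfund_def by blast

lemma netfund_affine: "netfund 0 m (\<lambda>j x. w j \<bullet> x + c j)"
  unfolding netfund_def
  by (rule exI[of _ "(map (\<lambda>j. (w j, c j)) [0..<m], [])"]) (simp add: nn_eval_def)

lemma netfund_layer:
  assumes "netfund d m F"
  shows "netfund (Suc d) p (\<lambda>j x. (\<Sum>k<m. R j k * relu (F k x)) + B j)"
proof -
  obtain N where N: "length (snd N) = d" "\<And>x. nn_eval N x = map (\<lambda>j. F j x) [0..<m]"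
    using assms unfolding netfund_def by blast
  let ?N = "(fst N, snd N @ [(map (\<lambda>j. map (R j) [0..<m]) [0..<p], map B [0..<p])])"
  have "nn_eval ?N x = map (\<lambda>j. (\<Sum>k<m. R j k * relu (F k x)) + B j) [0..<p]" for x
  proof -
    have "nn_eval ?N x = affine_layer (map (\<lambda>j. map (R j) [0..<m]) [0..<p]) (map B [0..<p])
             (map relu (nn_eval N x))"
      by (simp add: nn_eval_def nn_rest_append)
    also have "\<dots> = map (\<lambda>j. (\<Sum>k<m. R j k * relu (F k x)) + B j) [0..<p]"
      by (subst affine_layer_mk[where m=m]) (auto simp: N(2))
    finally show ?thesis .
  qed
  then show ?thesis unfolding netfund_def using N(1) by (intro exI[of _ ?N]) simp
qed

lemma relu_id: "relu z - relu (- z) = z"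
  by (simp add: relu_def)

lemma netfund_deepen:
  assumes "netfund d m F"
  shows "netfund (Suc d) m F"
proof -
  obtain N where N: "length (snd N) = d" "\<And>x. nn_eval N x = map (\<lambda>j. F j x) [0..<m]"
    using assms unfolding netfund_def by blast
  obtain A Ls where NAL: "N = (A, Ls)" by (cases N)
  define a where "a = length A"
  define R where "R = (\<lambda>j k. if k = j then 1 else if k = j + a then -1 else (0::real))"
  let ?A' = "A @ map (\<lambda>(w,c). (-w, -c)) A"
  let ?L = "(map (\<lambda>j. map (R j) [0..<2*a]) [0..<a], map (\<lambda>j. 0) [0..<a])"
  let ?N = "(?A', ?L # Ls)"
  have "nn_eval ?N x = nn_eval N x" for x
  proof -
    define z where "z = map (\<lambda>(w, c). w \<bullet> x + c) A"
    have lz: "length z = a" by (simp add: z_def a_def)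
    have neg: "map (\<lambda>(w, c). w \<bullet> x + c) (map (\<lambda>(w,c). (-w, -c)) A) = map uminus z"
      by (auto simp: z_def)
    have "affine_layer (fst ?L) (snd ?L) (map relu (z @ map uminus z)) = z"
    proof -
      have "affine_layer (fst ?L) (snd ?L) (map relu (z @ map uminus z))
         = map (\<lambda>j. (\<Sum>k<2*a. R j k * (map relu (z @ map uminus z))!k) + 0) [0..<a]"
        unfolding fst_conv snd_conv by (rule affine_layer_mk) (simp add: lz)
      also have "\<dots> = z"
      proof (rule nth_equalityI)
        fix j assume "j < length (map (\<lambda>j. (\<Sum>k<2*a. R j k * (map relu (z @ map uminus z))!k) + 0) [0..<a])"
        then have j: "j < a" by simp
        let ?v = "map relu (z @ map uminus z)"
        have "(\<Sum>k<2*a. R j k * ?v!k) = (\<Sum>k<2*a. (if k = j then ?v!k else 0) + (if k = j + a then - ?v!k else 0))"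
          by (rule sum.cong) (auto simp: R_def)
        also have "\<dots> = ?v!j - ?v!(j+a)"
          using j by (simp add: sum.distrib)
        also have "\<dots> = z!j"
          using j lz by (simp add: nth_append relu_id)
        finally show "map (\<lambda>j. (\<Sum>k<2*a. R j k * ?v!k) + 0) [0..<a] ! j = z ! j"
          using j by simp
      qed (simp add: lz)
      finally show ?thesis .
    qed
    moreover have "nn_eval ?N x = nn_rest (?L # Ls) (z @ map uminus z)"
      unfolding nn_eval_def fst_conv snd_conv map_append neg z_def ..
    ultimately show ?thesis
      by (simp only: nn_rest.simps) (simp add: NAL nn_eval_def z_def)
  qed
  then show ?thesis unfolding netfund_def using N NAL by (intro exI[of _ ?N]) simp
qed

lemma netfund_mono:
  assumes "netfund d m F" "d \<le> d'"
  shows "netfund d' m F"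
  using assms(2,1) by (induction d' rule: dec_induct) (auto intro: netfund_deepen)


definition blk :: "nat \<Rightarrow> nat \<Rightarrow> real list list \<Rightarrow> real list \<Rightarrow> real list list \<Rightarrow> real list
     \<Rightarrow> real list list \<times> real list" where
  "blk m1 m2 W1 b1 W2 b2 =
    (let p1 = min (length W1) (length b1); p2 = min (length W2) (length b2);
         R = (\<lambda>j k. if j < p1 then (if k < m1 then coef W1 j k else 0)
                    else (if m1 \<le> k then coef W2 (j - p1) (k - m1) else 0));
         B = (\<lambda>j. if j < p1 then b1!j else b2!(j - p1))
     in (map (\<lambda>j. map (R j) [0..<m1+m2]) [0..<p1+p2], map B [0..<p1+p2]))"

lemma sum_split_add:
  fixes g :: "nat \<Rightarrow> real"
  shows "(\<Sum>k<m1+m2. g k) = (\<Sum>k<m1. g k) + (\<Sum>k<m2. g (m1 + k))"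
proof -
  have "(\<Sum>k<m1+m2. g k) = (\<Sum>k\<in>{0..<m1}. g k) + (\<Sum>k\<in>{m1..<m1+m2}. g k)"
    by (simp add: sum.atLeastLessThan_concat lessThan_atLeast0)
  also have "(\<Sum>k\<in>{m1..<m1+m2}. g k) = (\<Sum>k<m2. g (m1 + k))"
    using sum.shift_bounds_nat_ivl[of g 0 m1 m2] by (simp add: lessThan_atLeast0 add.commute)
  finally show ?thesis by (simp add: lessThan_atLeast0)
qed

lemma blk_correct:
  assumes "length u1 = m1" "length u2 = m2"
  shows "affine_layer (fst (blk m1 m2 W1 b1 W2 b2)) (snd (blk m1 m2 W1 b1 W2 b2)) (u1 @ u2)
       = affine_layer W1 b1 u1 @ affine_layer W2 b2 u2"
proof -
  define p1 where "p1 = min (length W1) (length b1)"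
  define p2 where "p2 = min (length W2) (length b2)"
  define R where "R = (\<lambda>j k. if j < p1 then (if k < m1 then coef W1 j k else 0)
                    else (if m1 \<le> k then coef W2 (j - p1) (k - m1) else 0))"
  define B where "B = (\<lambda>j. if j < p1 then b1!j else b2!(j - p1))"
  have eq: "blk m1 m2 W1 b1 W2 b2 = (map (\<lambda>j. map (R j) [0..<m1+m2]) [0..<p1+p2], map B [0..<p1+p2])"
    unfolding blk_def Let_def p1_def p2_def R_def B_def ..
  have "affine_layer (fst (blk m1 m2 W1 b1 W2 b2)) (snd (blk m1 m2 W1 b1 W2 b2)) (u1 @ u2)
      = map (\<lambda>j. (\<Sum>k<m1+m2. R j k * (u1@u2)!k) + B j) [0..<p1+p2]"
    unfolding eq fst_conv snd_conv by (rule affine_layer_mk) (simp add: assms)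
  also have "\<dots> = affine_layer W1 b1 u1 @ affine_layer W2 b2 u2"
  proof (rule nth_equalityI)
    fix j assume "j < length (map (\<lambda>j. (\<Sum>k<m1+m2. R j k * (u1@u2)!k) + B j) [0..<p1+p2])"
    then have j: "j < p1 + p2" by simp
    have s: "(\<Sum>k<m1+m2. R j k * (u1@u2)!k) = (\<Sum>k<m1. R j k * u1!k) + (\<Sum>k<m2. R j (m1+k) * u2!k)"
      unfolding sum_split_add using assms by (simp add: nth_append)
    have m: "map (\<lambda>j. (\<Sum>k<m1+m2. R j k * (u1@u2)!k) + B j) [0..<p1+p2] ! j
        = (\<Sum>k<m1. R j k * u1!k) + (\<Sum>k<m2. R j (m1+k) * u2!k) + B j"
      using j s by (simp del: upt_Suc)
    show "map (\<lambda>j. (\<Sum>k<m1+m2. R j k * (u1@u2)!k) + B j) [0..<p1+p2] ! j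
        = (affine_layer W1 b1 u1 @ affine_layer W2 b2 u2) ! j"
    proof (cases "j < p1")
      case True
      have "(\<Sum>k<m1. R j k * u1!k) = (\<Sum>k<m1. coef W1 j k * u1!k)"
        by (rule sum.cong) (auto simp: R_def True)
      moreover have "(\<Sum>k<m2. R j (m1+k) * u2!k) = 0"
        by (rule sum.neutral) (auto simp: R_def True)
      ultimately show ?thesis unfolding m using True assms
        by (simp add: nth_append affine_layer_nth p1_def B_def)
    next
      case False
      have "(\<Sum>k<m1. R j k * u1!k) = 0"
        by (rule sum.neutral) (auto simp: R_def False)
      moreover have "(\<Sum>k<m2. R j (m1+k) * u2!k) = (\<Sum>k<m2. coef W2 (j - p1) k * u2!k)"
        by (rule sum.cong) (auto simp: R_def False)
      moreover have "j - p1 < p2" using j False by simp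
      moreover have "(affine_layer W1 b1 u1 @ affine_layer W2 b2 u2) ! j = affine_layer W2 b2 u2 ! (j - p1)"
        using False by (auto simp: nth_append p1_def)
      moreover have "affine_layer W2 b2 u2 ! (j - p1) = (\<Sum>k<length u2. coef W2 (j - p1) k * u2!k) + b2!(j - p1)"
        using \<open>j - p1 < p2\<close> by (intro affine_layer_nth) (simp add: p2_def)
      ultimately show ?thesis unfolding m using False assms
        by (simp add: B_def)
    qed
  qed (simp add: p1_def p2_def)
  finally show ?thesis .
qed

lemma nn_rest_Cons': "nn_rest (l # Ls) v = nn_rest Ls (affine_layer (fst l) (snd l) (map relu v))"
  by (cases l) simp

fun blks :: "nat \<Rightarrow> nat \<Rightarrow> (real list list \<times> real list) list \<Rightarrow> (real list list \<times> real list) list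
     \<Rightarrow> (real list list \<times> real list) list" where
  "blks m1 m2 ((W1,b1)#L1) ((W2,b2)#L2) =
     blk m1 m2 W1 b1 W2 b2 # blks (min (length W1) (length b1)) (min (length W2) (length b2)) L1 L2"
| "blks m1 m2 _ _ = []"

lemma length_blks: "length (blks m1 m2 L1 L2) = min (length L1) (length L2)"
  by (induction m1 m2 L1 L2 rule: blks.induct) auto

lemma blks_correct:
  assumes "length L1 = length L2" "length v1 = m1" "length v2 = m2"
  shows "nn_rest (blks m1 m2 L1 L2) (v1 @ v2) = nn_rest L1 v1 @ nn_rest L2 v2"
  using assms
proof (induction L1 arbitrary: L2 m1 m2 v1 v2)
  case Nil then show ?case by simp
next
  case (Cons l1 L1)
  obtain W1 b1 where l1: "l1 = (W1, b1)" by (cases l1)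
  obtain l2 L2' where L2: "L2 = l2 # L2'" using Cons.prems by (cases L2) auto
  obtain W2 b2 where l2: "l2 = (W2, b2)" by (cases l2)
  have "nn_rest (blks m1 m2 (l1 # L1) L2) (v1 @ v2)
      = nn_rest (blks (min (length W1) (length b1)) (min (length W2) (length b2)) L1 L2')
          (affine_layer W1 b1 (map relu v1) @ affine_layer W2 b2 (map relu v2))"
    using Cons.prems blk_correct[of "map relu v1" m1 "map relu v2" m2 W1 b1 W2 b2]
    by (simp only: l1 l2 L2 blks.simps nn_rest_Cons' map_append) simp
  also have "\<dots> = nn_rest (l1 # L1) v1 @ nn_rest L2 v2"
    using Cons.prems by (subst Cons.IH) (auto simp: l1 l2 L2)
  finally show ?case .
qed

lemma netfund_par:
  assumes "netfund d m F" "netfund d p G"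
  shows "netfund d (m + p) (\<lambda>j x. if j < m then F j x else G (j - m) x)"
proof -
  obtain N1 where N1: "length (snd N1) = d" "\<And>x. nn_eval N1 x = map (\<lambda>j. F j x) [0..<m]"
    using assms(1) unfolding netfund_def by blast
  obtain N2 where N2: "length (snd N2) = d" "\<And>x. nn_eval N2 x = map (\<lambda>j. G j x) [0..<p]"
    using assms(2) unfolding netfund_def by blast
  let ?N = "(fst N1 @ fst N2, blks (length (fst N1)) (length (fst N2)) (snd N1) (snd N2))"
  have "nn_eval ?N x = map (\<lambda>j. if j < m then F j x else G (j - m) x) [0..<m+p]" for x
  proof -
    have "nn_eval ?N x = nn_eval N1 x @ nn_eval N2 x"
      unfolding nn_eval_def fst_conv snd_conv map_append
      by (rule blks_correct) (use N1 N2 in auto)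
    also have "\<dots> = map (\<lambda>j. if j < m then F j x else G (j - m) x) [0..<m+p]"
      unfolding N1 N2 by (rule nth_equalityI) (auto simp: nth_append)
    finally show ?thesis .
  qed
  then show ?thesis unfolding netfund_def using N1 N2
    by (intro exI[of _ ?N]) (auto simp: length_blks)
qed

lemma netfun_par:
  assumes "netfun m F" "netfun p G"
  shows "netfun (m + p) (\<lambda>j x. if j < m then F j x else G (j - m) x)"
proof -
  obtain d1 d2 where "netfund d1 m F" "netfund d2 p G" using assms netfun_iff by blast
  then have "netfund (max d1 d2) m F" "netfund (max d1 d2) p G"
    by (auto intro: netfund_mono)
  then show ?thesis using netfun_iff netfund_par by blast
qed

lemma netfun_layer:
  assumes "netfun m F"
  shows "netfun p (\<lambda>j x. (\<Sum>k<m. R j k * relu (F k x)) + B j)"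
  using assms netfun_iff netfund_layer by blast

lemma netfun_cong:
  assumes "netfun p F" "\<And>j x. j < p \<Longrightarrow> F j x = G j x"
  shows "netfun p G"
proof -
  have "map (\<lambda>j. F j x) [0..<p] = map (\<lambda>j. G j x) [0..<p]" for x
    using assms(2) by (intro map_cong) auto
  then show ?thesis using assms(1) unfolding netfun_def by metis
qed

lemma netfun_affine: "netfun m (\<lambda>j x. w j \<bullet> x + c j)"
  using netfund_affine netfun_iff by blast



definition NFL :: "nat \<Rightarrow> (nat \<Rightarrow> real^'n::finite \<Rightarrow> real) \<Rightarrow> bool" where
  "NFL p H \<longleftrightarrow> (\<exists>m F \<pi> \<nu>. netfun m F \<and>
      (\<forall>i<p. \<pi> i < m \<and> \<nu> i < m \<and> F (\<pi> i) = H i \<and> F (\<nu> i) = (\<lambda>x. - H i x)))"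

lemma NFL_cong: "NFL p H \<Longrightarrow> (\<And>i. i < p \<Longrightarrow> H i = H' i) \<Longrightarrow> NFL p H'"
  unfolding NFL_def by (elim exE conjE) (intro exI conjI, assumption, simp)

lemma NFL_affine: "NFL p (\<lambda>i x. w i \<bullet> x + c i)"
proof -
  define F where "F = (\<lambda>j x. (if j < p then w j else - w (j - p)) \<bullet> x + (if j < p then c j else - c (j - p)))"
  have "netfun (p + p) F" unfolding F_def using netfun_affine[of "p+p" "\<lambda>j. if j < p then w j else - w (j - p)" "\<lambda>j. if j < p then c j else - c (j - p)"] .
  moreover have "\<forall>i<p. i < p + p \<and> p + i < p + p \<and> F i = (\<lambda>x. w i \<bullet> x + c i) \<and> F (p + i) = (\<lambda>x. - (w i \<bullet> x + c i))"
    by (simp add: F_def fun_eq_iff)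
  ultimately show ?thesis unfolding NFL_def
    by (intro exI[of _ "p+p"] exI[of _ F] exI[of _ "\<lambda>i. i"] exI[of _ "\<lambda>i. p + i"]) simp
qed

lemma NFL_append:
  assumes "NFL p H" "NFL q G"
  shows "NFL (p + q) (\<lambda>i. if i < p then H i else G (i - p))"
proof -
  obtain m1 F1 \<pi>1 \<nu>1 where A: "netfun m1 F1"
    "\<forall>i<p. \<pi>1 i < m1 \<and> \<nu>1 i < m1 \<and> F1 (\<pi>1 i) = H i \<and> F1 (\<nu>1 i) = (\<lambda>x. - H i x)"
    using assms(1) unfolding NFL_def by blast
  obtain m2 F2 \<pi>2 \<nu>2 where B: "netfun m2 F2"
    "\<forall>i<q. \<pi>2 i < m2 \<and> \<nu>2 i < m2 \<and> F2 (\<pi>2 i) = G i \<and> F2 (\<nu>2 i) = (\<lambda>x. - G i x)"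
    using assms(2) unfolding NFL_def by blast
  have C: "netfun (m1 + m2) (\<lambda>j x. if j < m1 then F1 j x else F2 (j - m1) x)"
    by (rule netfun_par[OF A(1) B(1)])
  define FF where "FF = (\<lambda>j x. if j < m1 then F1 j x else F2 (j - m1) x)"
  define \<pi> where "\<pi> = (\<lambda>i. if i < p then \<pi>1 i else m1 + \<pi>2 (i - p))"
  define \<nu> where "\<nu> = (\<lambda>i. if i < p then \<nu>1 i else m1 + \<nu>2 (i - p))"
  have D: "\<forall>i<p+q. \<pi> i < m1+m2 \<and> \<nu> i < m1+m2 \<and> FF (\<pi> i) = (\<lambda>i. if i < p then H i else G (i - p)) i
     \<and> FF (\<nu> i) = (\<lambda>x. - (\<lambda>i. if i < p then H i else G (i - p)) i x)"
  proof (intro allI impI)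
    fix i assume i: "i < p + q"
    show "\<pi> i < m1+m2 \<and> \<nu> i < m1+m2 \<and> FF (\<pi> i) = (\<lambda>i. if i < p then H i else G (i - p)) i
     \<and> FF (\<nu> i) = (\<lambda>x. - (\<lambda>i. if i < p then H i else G (i - p)) i x)"
    proof (cases "i < p")
      case True
      then show ?thesis using A(2)[rule_format, OF True] by (simp add: \<pi>_def \<nu>_def FF_def)
    next
      case False
      then have "i - p < q" using i by simp
      then show ?thesis using B(2)[rule_format, OF \<open>i - p < q\<close>] False by (simp add: \<pi>_def \<nu>_def FF_def)
    qed
  qed
  show ?thesis unfolding NFL_def
    by (intro exI[of _ "m1+m2"] exI[of _ FF] exI[of _ \<pi>] exI[of _ \<nu>] conjI D) (simp add: C FF_def)
qed

lemma NFL_layer: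
  assumes "NFL p H"
  shows "NFL q (\<lambda>i x. (\<Sum>k<p. R i k * H k x + S i k * relu (H k x)) + B i)"
proof -
  obtain m F \<pi> \<nu> where A: "netfun m F"
    "\<And>i. i<p \<Longrightarrow> \<pi> i < m \<and> \<nu> i < m \<and> F (\<pi> i) = H i \<and> F (\<nu> i) = (\<lambda>x. - H i x)"
    using assms(1) unfolding NFL_def by blast
  define C where "C = (\<lambda>i l. \<Sum>k<p. (if \<pi> k = l then R i k + S i k else 0) - (if \<nu> k = l then R i k else 0))"
  have key: "(\<Sum>l<m. C i l * relu (F l x)) = (\<Sum>k<p. R i k * H k x + S i k * relu (H k x))" for i x
  proof -
    have "(\<Sum>l<m. C i l * relu (F l x))
        = (\<Sum>k<p. \<Sum>l<m. (if \<pi> k = l then (R i k + S i k) * relu (F l x) else 0)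
                      - (if \<nu> k = l then R i k * relu (F l x) else 0))"
      unfolding C_def sum_distrib_right by (subst sum.swap) (auto intro!: sum.cong simp: algebra_simps)
    also have "\<dots> = (\<Sum>k<p. (R i k + S i k) * relu (F (\<pi> k) x) - R i k * relu (F (\<nu> k) x))"
      by (intro sum.cong refl) (simp add: sum_subtractf A(2) sum.delta')
    also have "\<dots> = (\<Sum>k<p. R i k * H k x + S i k * relu (H k x))"
    proof (intro sum.cong refl)
      fix k assume "k \<in> {..<p}"
      then have "F (\<pi> k) x = H k x" "F (\<nu> k) x = - H k x" using A(2)[of k] by auto
      then show "(R i k + S i k) * relu (F (\<pi> k) x) - R i k * relu (F (\<nu> k) x) = R i k * H k x + S i k * relu (H k x)"
        using relu_id[of "H k x"] by (simp add: algebra_simps)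
    qed
    finally show ?thesis .
  qed
  define R' where "R' = (\<lambda>j l. if j < q then C j l else - C (j - q) l)"
  define B' where "B' = (\<lambda>j. if j < q then B j else - B (j - q))"
  have N: "netfun (q + q) (\<lambda>j x. (\<Sum>l<m. R' j l * relu (F l x)) + B' j)"
    by (rule netfun_layer[OF A(1)])
  define FF where "FF = (\<lambda>j x. (\<Sum>l<m. R' j l * relu (F l x)) + B' j)"
  define HH where "HH = (\<lambda>i x. (\<Sum>k<p. R i k * H k x + S i k * relu (H k x)) + B i)"
  have D: "\<forall>i<q. i < q + q \<and> q + i < q + q \<and> FF i = HH i \<and> FF (q + i) = (\<lambda>x. - HH i x)"
  proof (intro allI impI conjI)
    fix i assume i: "i < q"
    show "FF i = HH i" using i by (simp add: fun_eq_iff FF_def HH_def R'_def B'_def key)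
    have "FF (q + i) x = - HH i x" for x
    proof -
      have "FF (q + i) x = (\<Sum>l<m. - (C i l * relu (F l x))) - B i"
        by (simp add: FF_def R'_def B'_def)
      also have "\<dots> = - HH i x" by (simp add: sum_negf key HH_def)
      finally show ?thesis .
    qed
    then show "FF (q + i) = (\<lambda>x. - HH i x)" by auto
  qed auto
  show ?thesis unfolding NFL_def HH_def[symmetric]
    by (intro exI[of _ "q+q"] exI[of _ FF] exI[of _ "\<lambda>i. i"] exI[of _ "\<lambda>i. q + i"] conjI D)
       (simp add: N FF_def)
qed

lemma netfun_of_NFL:
  assumes "NFL p H"
  shows "netfun p H"
proof -
  obtain m F \<pi> \<nu> where A: "netfun m F"
    "\<And>i. i<p \<Longrightarrow> \<pi> i < m \<and> \<nu> i < m \<and> F (\<pi> i) = H i \<and> F (\<nu> i) = (\<lambda>x. - H i x)"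
    using assms(1) unfolding NFL_def by blast
  have N: "netfun p (\<lambda>j x. (\<Sum>l<m. ((if \<pi> j = l then 1 else 0) - (if \<nu> j = l then 1 else 0)) * relu (F l x)) + 0)"
    by (rule netfun_layer[OF A(1)])
  show ?thesis
  proof (rule netfun_cong[OF N])
    fix j x assume j: "j < p"
    have "(\<Sum>l<m. ((if \<pi> j = l then 1 else 0) - (if \<nu> j = l then 1 else 0)) * relu (F l x))
       = (\<Sum>l<m. (if \<pi> j = l then relu (F l x) else 0) - (if \<nu> j = l then relu (F l x) else 0))"
      by (intro sum.cong) auto
    also have "\<dots> = relu (F (\<pi> j) x) - relu (F (\<nu> j) x)"
      using A(2)[OF j] by (simp add: sum_subtractf sum.delta')
    also have "\<dots> = H j x" using A(2)[OF j] relu_id[of "H j x"] by simp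
    finally show "(\<Sum>l<m. ((if \<pi> j = l then 1 else 0) - (if \<nu> j = l then 1 else 0)) * relu (F l x)) + 0 = H j x"
      by simp
  qed
qed

definition NF :: "(real^'n::finite \<Rightarrow> real) \<Rightarrow> bool" where
  "NF h \<longleftrightarrow> NFL 1 (\<lambda>_. h)"

lemma NF_affine: "NF (\<lambda>x. w \<bullet> x + c)"
  unfolding NF_def using NFL_affine[of 1 "\<lambda>_. w" "\<lambda>_. c"] by simp

lemma NF_const: "NF (\<lambda>x. c)"
  using NF_affine[of 0 c] by simp

lemma NF_comp: "NF (\<lambda>x. x $ i)"
  using NF_affine[of "axis i 1" 0] by (simp add: cart_eq_inner_axis inner_commute)

lemma NF_lin:
  assumes "NF h1" "NF h2"
  shows "NF (\<lambda>x. a * h1 x + b * h2 x + c)"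
proof -
  have "NFL (1 + 1) (\<lambda>i. if i < 1 then h1 else h2)"
    using NFL_append[of 1 "\<lambda>_. h1" 1 "\<lambda>_. h2"] assms unfolding NF_def by simp
  then have X: "NFL 1 (\<lambda>i x. (\<Sum>k<(1+1::nat). (if k = 0 then a else b) * (if k < 1 then h1 else h2) x + 0 * relu ((if k < 1 then h1 else h2) x)) + c)"
    by (rule NFL_layer)
  show ?thesis unfolding NF_def
    by (rule NFL_cong[OF X]) (simp add: fun_eq_iff)
qed

lemma NF_relu:
  assumes "NF h"
  shows "NF (\<lambda>x. relu (h x))"
proof -
  have X: "NFL 1 (\<lambda>i x. (\<Sum>k<(1::nat). 0 * h x + 1 * relu (h x)) + 0)"
    using assms unfolding NF_def by (rule NFL_layer)
  show ?thesis unfolding NF_def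
    by (rule NFL_cong[OF X]) (simp add: fun_eq_iff)
qed

lemma NF_add: "NF h1 \<Longrightarrow> NF h2 \<Longrightarrow> NF (\<lambda>x. h1 x + h2 x)"
  using NF_lin[of h1 h2 1 1 0] by simp

lemma NF_scale: "NF h \<Longrightarrow> NF (\<lambda>x. a * h x + c)"
  using NF_lin[of h h a 0 c] by simp

lemma NF_max:
  assumes "NF h1" "NF h2"
  shows "NF (\<lambda>x. max (h1 x) (h2 x))"
proof -
  have "NF (\<lambda>x. 1 * h2 x + (-1) * h1 x + 0)" by (rule NF_lin[OF assms(2,1)])
  then have "NF (\<lambda>x. relu (h2 x - h1 x))" by (intro NF_relu) simp
  then have "NF (\<lambda>x. 1 * h1 x + 1 * relu (h2 x - h1 x) + 0)" by (rule NF_lin[OF assms(1)])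
  moreover have "1 * h1 x + 1 * relu (h2 x - h1 x) + 0 = max (h1 x) (h2 x)" for x
    by (simp add: relu_def max_def)
  ultimately show ?thesis by simp
qed

lemma NF_sum:
  assumes "finite P" "\<And>p. p \<in> P \<Longrightarrow> NF (T p)"
  shows "NF (\<lambda>x. \<Sum>p\<in>P. T p x)"
  using assms by (induction P rule: finite_induct) (auto intro: NF_add NF_const)

lemma NF_Max:
  assumes "finite P" "P \<noteq> {}" "\<And>p. p \<in> P \<Longrightarrow> NF (T p)"
  shows "NF (\<lambda>x. MAX p\<in>P. T p x)"
  using assms
proof (induction P rule: finite_ne_induct)
  case (singleton p) then show ?case by simp
next
  case (insert p P)
  then have "NF (\<lambda>x. max (T p x) (MAX p\<in>P. T p x))" by (intro NF_max) auto
  then show ?case using insert by simp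
qed

lemma NFL_of_NF:
  assumes "\<And>j. j < p \<Longrightarrow> NF (F j)"
  shows "NFL p F"
  using assms
proof (induction p)
  case 0
  show ?case using NFL_affine[of 0] unfolding NFL_def by auto
next
  case (Suc p)
  then have "NFL (p + 1) (\<lambda>i. if i < p then F i else (\<lambda>_. F p) (i - p))"
    by (intro NFL_append) (auto simp: NF_def)
  then show ?case unfolding Suc_eq_plus1 by (rule NFL_cong) (auto simp: less_Suc_eq)
qed



lemma unit_cube_cbox: "(unit_cube :: (real^'n::finite) set) = cbox 0 1"
  unfolding unit_cube_def by (auto simp: mem_box_cart)

lemma compact_unit_cube: "compact (unit_cube :: (real^'n::finite) set)"
  unfolding unit_cube_cbox by (rule compact_cbox)

lemma zero_in_unit_cube: "0 \<in> unit_cube"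
  unfolding unit_cube_def by simp

lemma NF_abs: "NF h \<Longrightarrow> NF (\<lambda>x. \<bar>h x\<bar>)"
proof -
  assume h: "NF h"
  have "NF (\<lambda>x. (-1) * h x + 0)" by (rule NF_scale[OF h])
  then have a: "NF (\<lambda>x. relu (- h x))" by (intro NF_relu) simp
  have b: "NF (\<lambda>x. relu (h x))" by (rule NF_relu[OF h])
  have "NF (\<lambda>x. relu (h x) + relu (- h x))" by (rule NF_add[OF b a])
  moreover have "relu (h x) + relu (- h x) = \<bar>h x\<bar>" for x by (simp add: relu_def)
  ultimately show ?thesis by simp
qed

theorem NF_approx:
  fixes g :: "real^'n::finite \<Rightarrow> real"
  assumes cont: "continuous_on unit_cube g" and e: "e > 0"
  shows "\<exists>h. NF h \<and> (\<forall>x\<in>unit_cube. \<bar>g x - h x\<bar> \<le> e)"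
proof -
  let ?S = "unit_cube :: (real^'n) set"
  have cS: "compact ?S" by (rule compact_unit_cube)
  obtain B where B: "B > 0" "\<And>x. x \<in> ?S \<Longrightarrow> \<bar>g x\<bar> \<le> B"
    using compact_imp_bounded[OF compact_continuous_image[OF cont cS]]
    unfolding bounded_pos by auto
  have uc: "uniformly_continuous_on ?S g"
    by (rule compact_uniformly_continuous[OF cont cS])
  obtain \<delta> where \<delta>: "\<delta> > 0" "\<And>x x'. x \<in> ?S \<Longrightarrow> x' \<in> ?S \<Longrightarrow> dist x' x < \<delta> \<Longrightarrow> dist (g x') (g x) < e/2"
    using uc e unfolding uniformly_continuous_on_def by (meson half_gt_zero)
  define C where "C = 2 * B / \<delta>"
  define D where "D = real CARD('n)"
  have C: "C > 0" "C * \<delta> = 2 * B" using B \<delta> by (auto simp: C_def)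
  have D: "D \<ge> 0" by (simp add: D_def)
  define r where "r = min \<delta> (e / (2 * (C * D + 1)))"
  have r: "r > 0" "r \<le> \<delta>" using \<delta> e C D by (auto simp: r_def intro!: divide_pos_pos add_nonneg_pos)
  have CDr: "C * D * r \<le> e / 2"
  proof -
    have "C * D * r \<le> C * D * (e / (2 * (C * D + 1)))"
      using C D r by (intro mult_left_mono) (auto simp: r_def)
    also have "\<dots> = (e / 2) * (C * D / (C * D + 1))"
      by (simp add: field_simps)
    also have "\<dots> \<le> e / 2"
    proof -
      have pos: "0 < C * D + 1" using C D by (simp add: add_nonneg_pos)
      then have "C * D / (C * D + 1) \<le> 1" by (simp add: divide_le_eq)
      then show ?thesis using e by (intro mult_left_le) auto
    qed
    finally show ?thesis .
  qed
  obtain P where P: "P \<subseteq> ?S" "finite P" "?S \<subseteq> (\<Union>p\<in>P. ball p r)"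
  proof (rule compactE_image[OF cS, of ?S "\<lambda>p. ball p r"])
    show "?S \<subseteq> (\<Union>c\<in>?S. ball c r)" using r by force
  qed auto
  have Pne: "P \<noteq> {}" using P(3) zero_in_unit_cube by auto
  define s where "s = (\<lambda>x p::real^'n. \<Sum>i\<in>UNIV. \<bar>x $ i - p $ i\<bar>)"
  define T where "T = (\<lambda>p x. g p - C * s x (p::real^'n))"
  define h where "h = (\<lambda>x. MAX p\<in>P. T p x)"
  have NFT: "NF (T p)" for p
  proof -
    have "NF (\<lambda>x. \<bar>x $ i - p $ i\<bar>)" for i
      by (intro NF_abs) (rule NF_scale[OF NF_comp[of i], of 1 "- (p $ i)", simplified])
    then have "NF (\<lambda>x. s x p)" unfolding s_def by (intro NF_sum) auto
    then show ?thesis unfolding T_def using NF_scale[of "\<lambda>x. s x p" "- C" "g p"] by simp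
  qed
  have NFh: "NF h" unfolding h_def using P(2) Pne NFT by (intro NF_Max) auto
  have s_ge: "dist x p \<le> s x p" for x p
    unfolding s_def dist_norm using norm_le_l1_cart[of "x - p"] by simp
  have s_le: "s x p \<le> D * dist x p" for x p
  proof -
    have "s x p \<le> (\<Sum>i\<in>(UNIV::'n set). dist x p)"
      unfolding s_def dist_norm by (intro sum_mono) (metis component_le_norm_cart vector_minus_component)
    then show ?thesis by (simp add: D_def)
  qed
  have "\<bar>g x - h x\<bar> \<le> e" if x: "x \<in> ?S" for x
  proof -
    obtain p where p: "p \<in> P" "dist p x < r" using P(3) x by (auto simp: dist_commute)
    have "T p x \<ge> g x - e"
    proof -
      have "dist (g p) (g x) < e/2" using \<delta>(2)[of x p] p r P(1) x by auto
      then have "g p \<ge> g x - e/2" unfolding dist_real_def by linarith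
      moreover have "C * s x p \<le> C * D * r"
      proof -
        have "s x p \<le> D * r" using s_le[of x p] p D by (smt (verit) dist_commute mult_left_mono)
        then show ?thesis using C by (simp add: mult.assoc mult_left_mono)
      qed
      ultimately show ?thesis using CDr unfolding T_def by linarith
    qed
    moreover have "T p x \<le> h x" unfolding h_def using P(2) p(1) by (intro Max_ge) auto
    moreover have "h x \<le> g x + e/2"
    proof -
      have "T q x \<le> g x + e/2" if q: "q \<in> P" for q
      proof (cases "dist q x < \<delta>")
        case True
        then have "dist (g q) (g x) < e/2" using \<delta>(2)[of x q] q P(1) x by auto
        then have "g q \<le> g x + e/2" unfolding dist_real_def by linarith
        moreover have "0 \<le> C * s x q" using C by (simp add: s_def)
        ultimately show ?thesis unfolding T_def by linarith
      next
        case False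
        then have "s x q \<ge> \<delta>" using s_ge[of x q] by (simp add: dist_commute)
        then have "C * s x q \<ge> 2 * B" using C by (metis mult_left_mono less_imp_le)
        moreover have "g q \<le> B" "- B \<le> g x" using B(2)[of q] B(2)[OF x] q P(1) by auto
        ultimately show ?thesis unfolding T_def using e by linarith
      qed
      then show ?thesis unfolding h_def using P(2) Pne by (subst Max_le_iff) auto
    qed
    ultimately show ?thesis by linarith
  qed
  then show ?thesis using NFh by blast
qed



lemma lagrange1:
  "lagrange_interp 1 xs ys y = ys 0 * ((y - xs 1) / (xs 0 - xs 1)) + ys 1 * ((y - xs 0) / (xs 1 - xs 0))"
proof -
  have a: "{..(1::nat)} = {0, 1}" by auto
  have b: "{0, Suc 0} - {0} = {Suc 0}" "{0, Suc 0} - {Suc 0} = {0::nat}" by auto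
  show ?thesis unfolding lagrange_interp_def a by (simp add: b)
qed

lemma convex_bound:
  fixes u v c l r :: real
  assumes "0 \<le> l" "l \<le> 1" "\<bar>u - c\<bar> \<le> r" "\<bar>v - c\<bar> \<le> r"
  shows "\<bar>(1 - l) * u + l * v - c\<bar> \<le> r"
proof -
  have "(1 - l) * u + l * v - c = (1 - l) * (u - c) + l * (v - c)" by (simp add: algebra_simps)
  also have "\<bar>\<dots>\<bar> \<le> \<bar>(1 - l) * (u - c)\<bar> + \<bar>l * (v - c)\<bar>"
    by (rule abs_triangle_ineq)
  also have "\<dots> = (1 - l) * \<bar>u - c\<bar> + l * \<bar>v - c\<bar>"
    using assms by (simp add: abs_mult)
  also have "\<dots> \<le> (1 - l) * r + l * r"
    using assms by (intro add_mono mult_left_mono) auto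
  finally show ?thesis by (simp add: algebra_simps)
qed

lemma convex_pos:
  fixes u v l :: real
  assumes "0 \<le> l" "l \<le> 1" "u > 0" "v > 0"
  shows "(1 - l) * u + l * v > 0"
proof (cases "l = 0")
  case True then show ?thesis using assms by simp
next
  case False
  then have "l * v > 0" using assms by simp
  moreover have "(1 - l) * u \<ge> 0" using assms by simp
  ultimately show ?thesis by linarith
qed

context
  fixes M :: nat and t H :: "nat \<Rightarrow> real" and fx :: "real \<Rightarrow> real" and \<eta> B :: real
  assumes M: "M \<ge> 1"
    and tdef: "\<And>i. i \<le> M \<Longrightarrow> t i = real i / real M"
    and Hpos: "\<And>g. g \<le> M \<Longrightarrow> H g > 0"
    and Happ: "\<And>g. g \<le> M \<Longrightarrow> \<bar>H g - fx (real g / real M)\<bar> \<le> 2 * \<eta>"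
    and osc: "\<And>y y'. y \<in> {0..1} \<Longrightarrow> y' \<in> {0..1} \<Longrightarrow> \<bar>y - y'\<bar> \<le> 1 / real M \<Longrightarrow> \<bar>fx y - fx y'\<bar> \<le> \<eta>"
    and fint: "(fx has_integral 1) {0..1}"
    and fbd: "\<And>y. y \<in> {0..1} \<Longrightarrow> 0 \<le> fx y \<and> fx y \<le> B"
    and eta: "0 < \<eta>" "\<eta> \<le> 1/12"
begin

lemma Mpos: "real M > 0" using M by simp

lemma t_range: "i \<le> M \<Longrightarrow> 0 \<le> t i \<and> t i \<le> 1"
  using tdef[of i] Mpos by (simp add: divide_le_eq_1_pos)

lemma t_lt: "i < M \<Longrightarrow> t i < t (Suc i)"
  using tdef[of i] tdef[of "Suc i"] Mpos by (simp add: divide_strict_right_mono)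

lemma poly_eq:
  assumes i: "i < M"
  shows "spice_poly 1 t H i y = H i * ((y - t (Suc i)) / (t i - t (Suc i))) + H (Suc i) * ((y - t i) / (t (Suc i) - t i))"
  unfolding spice_poly_def lagrange1 by simp

lemma piece_bound:
  assumes i: "i < M" and y: "t i \<le> y" "y \<le> t (Suc i)"
  shows "\<bar>spice_poly 1 t H i y - fx y\<bar> \<le> 3 * \<eta>" "spice_poly 1 t H i y > 0"
proof -
  have ti: "t i = real i / real M" and ts: "t (Suc i) = real (Suc i) / real M"
    using tdef i by auto
  have len: "t (Suc i) - t i = 1 / real M" unfolding ti ts using Mpos by (simp add: field_simps)
  define l where "l = (y - t i) / (t (Suc i) - t i)"
  have d: "t (Suc i) - t i > 0" using len Mpos by simp
  have l: "0 \<le> l" "l \<le> 1" using y d by (auto simp: l_def divide_le_eq_1_pos intro!: divide_nonneg_pos)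
  have eq: "spice_poly 1 t H i y = (1 - l) * H i + l * H (Suc i)"
  proof -
    have d1: "t (Suc i) - t i \<noteq> 0" "t i - t (Suc i) \<noteq> 0" using d by auto
    have "(y - t (Suc i)) / (t i - t (Suc i)) = 1 - (y - t i) / (t (Suc i) - t i)"
      using d1 by (simp add: field_simps)
    then show ?thesis unfolding poly_eq[OF i] l_def by (simp only: mult.commute)
  qed
  have ti01: "t i \<in> {0..1}" and ts01: "t (Suc i) \<in> {0..1}"
    using i Mpos unfolding ti ts by (auto simp: field_simps)
  have y01: "y \<in> {0..1}" using y ti01 ts01 by auto
  have "\<bar>H i - fx y\<bar> \<le> 3 * \<eta>"
  proof -
    have "\<bar>H i - fx (t i)\<bar> \<le> 2 * \<eta>" using Happ[of i] i ti by simp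
    moreover have "\<bar>fx (t i) - fx y\<bar> \<le> \<eta>" using osc[OF ti01 y01] y len by simp
    ultimately show ?thesis by linarith
  qed
  moreover have "\<bar>H (Suc i) - fx y\<bar> \<le> 3 * \<eta>"
  proof -
    have "\<bar>H (Suc i) - fx (t (Suc i))\<bar> \<le> 2 * \<eta>" using Happ[of "Suc i"] i ts by simp
    moreover have "\<bar>fx (t (Suc i)) - fx y\<bar> \<le> \<eta>" using osc[OF ts01 y01] y len by simp
    ultimately show ?thesis by linarith
  qed
  ultimately show "\<bar>spice_poly 1 t H i y - fx y\<bar> \<le> 3 * \<eta>"
    unfolding eq by (rule convex_bound[OF l])
  show "spice_poly 1 t H i y > 0" unfolding eq using Hpos i
    by (intro convex_pos[OF l]) auto
qed

lemma index_props:
  assumes y: "0 \<le> y" "y \<le> 1"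
  shows "spice_index (Suc M) t y < M" "t (spice_index (Suc M) t y) \<le> y"
        "y \<le> t (Suc (spice_index (Suc M) t y))"
proof -
  define S where "S = {i. i < M \<and> t i \<le> y}"
  have fin: "finite S" unfolding S_def by auto
  have ne: "0 \<in> S" unfolding S_def using M tdef[of 0] y by auto
  have idx: "spice_index (Suc M) t y = Max S" unfolding spice_index_def S_def by simp
  have mem: "Max S \<in> S" using fin ne by (intro Max_in) auto
  then show "spice_index (Suc M) t y < M" "t (spice_index (Suc M) t y) \<le> y"
    unfolding idx S_def by auto
  show "y \<le> t (Suc (spice_index (Suc M) t y))"
  proof (cases "Suc (Max S) < M")
    case True
    have "\<not> Suc (Max S) \<in> S" using Max_ge[OF fin, of "Suc (Max S)"] by auto
    then show ?thesis using True unfolding idx S_def by auto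
  next
    case False
    then have "Suc (Max S) = M" using mem unfolding S_def by auto
    then show ?thesis unfolding idx using tdef[of M] Mpos y by simp
  qed
qed

lemma unnorm_bound:
  assumes y: "0 \<le> y" "y \<le> 1"
  shows "\<bar>spice_unnorm 1 (Suc M) t H y - fx y\<bar> \<le> 3 * \<eta>"
proof -
  let ?i = "spice_index (Suc M) t y"
  have p: "\<bar>spice_poly 1 t H ?i y - fx y\<bar> \<le> 3 * \<eta>" "spice_poly 1 t H ?i y > 0"
    using piece_bound[OF index_props[OF y]] by auto
  then show ?thesis unfolding spice_unnorm_def spice_pbar_def by simp
qed

lemma pbar_cont: "i < M \<Longrightarrow> continuous_on {a..b} (spice_pbar 1 t H i)"
  unfolding spice_pbar_def poly_eq using t_lt[of i] by (intro continuous_intros) auto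

lemma int_sum:
  assumes "k \<le> M"
  shows "(\<Sum>i<k. integral {t i..t (Suc i)} fx) = integral {0..t k} fx"
  using assms
proof (induction k)
  case 0
  then show ?case using tdef[of 0] by simp
next
  case (Suc k)
  have tk: "t k = real k / real M" "t (Suc k) = real (Suc k) / real M" using tdef Suc.prems by auto
  have sub: "{0..t (Suc k)} \<subseteq> {0..1}" using t_range[OF Suc.prems] by auto
  have int: "fx integrable_on {0..t (Suc k)}"
    using integrable_subinterval_real[OF has_integral_integrable[OF fint] sub] .
  have "integral {0..t k} fx + integral {t k..t (Suc k)} fx = integral {0..t (Suc k)} fx"
    using t_range[of k] Suc.prems t_lt[of k] by (intro Henstock_Kurzweil_Integration.integral_combine[OF _ _ int]) auto
  then show ?case using Suc by simp
qed

lemma normalizer_bound: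
  "\<bar>spice_normalizer 1 (Suc M) t H - 1\<bar> \<le> 3 * \<eta>"
proof -
  have piece: "\<bar>integral {t i..t (Suc i)} (spice_pbar 1 t H i) - integral {t i..t (Suc i)} fx\<bar> \<le> 3 * \<eta> / real M"
    if i: "i < M" for i
  proof -
    have ti: "t i = real i / real M" and ts: "t (Suc i) = real (Suc i) / real M"
      using tdef i by auto
    have len: "t (Suc i) - t i = 1 / real M" unfolding ti ts using Mpos by (simp add: field_simps)
    have sub: "{t i..t (Suc i)} \<subseteq> {0..1}" using t_range[of i] t_range[of "Suc i"] i by auto
    have i1: "(spice_pbar 1 t H i) integrable_on {t i..t (Suc i)}"
      by (rule integrable_continuous_interval[OF pbar_cont[OF i]])
    have i2: "fx integrable_on {t i..t (Suc i)}"
      using integrable_subinterval_real[OF has_integral_integrable[OF fint] sub] .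
    have hi: "((\<lambda>y. spice_pbar 1 t H i y - fx y) has_integral
        (integral {t i..t (Suc i)} (spice_pbar 1 t H i) - integral {t i..t (Suc i)} fx)) {t i..t (Suc i)}"
      by (intro has_integral_diff integrable_integral i1 i2)
    have "norm (integral {t i..t (Suc i)} (spice_pbar 1 t H i) - integral {t i..t (Suc i)} fx)
        \<le> 3 * \<eta> * measure lborel {t i..t (Suc i)}"
    proof (rule has_integral_bound_real[OF _ _ hi])
      show "0 \<le> 3 * \<eta>" using eta by simp
      show "finite {}" by simp
      fix y assume "y \<in> {t i..t (Suc i)} - {}"
      then have y: "t i \<le> y" "y \<le> t (Suc i)" by auto
      show "norm (spice_pbar 1 t H i y - fx y) \<le> 3 * \<eta>"
        using piece_bound[OF i y] unfolding spice_pbar_def by simp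
    qed
    then show ?thesis using len t_lt[OF i] by simp
  qed
  have "spice_normalizer 1 (Suc M) t H - 1
      = (\<Sum>i<M. integral {t i..t (Suc i)} (spice_pbar 1 t H i) - integral {t i..t (Suc i)} fx)"
  proof -
    have "(\<Sum>i<M. integral {t i..t (Suc i)} fx) = 1"
      using int_sum[of M] tdef[of M] Mpos integral_unique[OF fint] by simp
    then show ?thesis unfolding spice_normalizer_def by (simp add: sum_subtractf)
  qed
  also have "\<bar>\<dots>\<bar> \<le> (\<Sum>i<M. 3 * \<eta> / real M)"
    by (rule order_trans[OF sum_abs]) (intro sum_mono piece, simp)
  also have "\<dots> = 3 * \<eta>" using Mpos by simp
  finally show ?thesis .
qed

lemma density_bound:
  assumes y: "0 \<le> y" "y \<le> 1"
  shows "\<bar>fx y - spice_unnorm 1 (Suc M) t H y / spice_normalizer 1 (Suc M) t H\<bar> \<le> 4 * \<eta> * (B + 1)"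
proof -
  define p where "p = spice_unnorm 1 (Suc M) t H y"
  define Z where "Z = spice_normalizer 1 (Suc M) t H"
  define f0 where "f0 = fx y"
  have pf: "\<bar>p - f0\<bar> \<le> 3 * \<eta>" unfolding p_def f0_def by (rule unnorm_bound[OF y])
  have Z1: "\<bar>Z - 1\<bar> \<le> 3 * \<eta>" unfolding Z_def by (rule normalizer_bound)
  have f0: "0 \<le> f0" "f0 \<le> B" using fbd y unfolding f0_def by auto
  have Zpos: "Z \<ge> 3/4" using Z1 eta by linarith
  have "f0 - p / Z = (f0 * (Z - 1) + (f0 - p)) / Z" using Zpos by (simp add: field_simps)
  also have "\<bar>\<dots>\<bar> = \<bar>f0 * (Z - 1) + (f0 - p)\<bar> / Z" using Zpos by simp
  also have "\<dots> \<le> (B * (3 * \<eta>) + 3 * \<eta>) / Z"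
  proof (intro divide_right_mono)
    have "\<bar>f0 * (Z - 1)\<bar> \<le> B * (3 * \<eta>)"
      unfolding abs_mult using f0 Z1 by (intro mult_mono) auto
    then show "\<bar>f0 * (Z - 1) + (f0 - p)\<bar> \<le> B * (3 * \<eta>) + 3 * \<eta>" using pf by linarith
  qed (use Zpos in simp)
  also have "\<dots> \<le> (B * (3 * \<eta>) + 3 * \<eta>) / (3/4)"
    using Zpos f0 eta by (intro divide_left_mono) auto
  also have "\<dots> = 4 * \<eta> * (B + 1)" by (simp add: field_simps)
  finally show ?thesis unfolding p_def Z_def f0_def .
qed

end



theorem corollary1:
  fixes f :: "real^'n \<Rightarrow> real \<Rightarrow> real" and \<epsilon> :: real
  assumes cont: "continuous_on (unit_cube \<times> {0..1}) (\<lambda>(x, y). f x y)"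
    and nonneg: "\<forall>x \<in> unit_cube. \<forall>y \<in> {0..1}. 0 \<le> f x y"
    and dens: "\<forall>x \<in> unit_cube. ((f x) has_integral 1) {0..1}"
    and eps: "\<epsilon> > 0"
  shows "\<exists>n K (N :: 'n network). spice_net n K N \<and>
           (\<exists>\<delta> < \<epsilon>. \<forall>x \<in> unit_cube. \<forall>y \<in> {0..1}.
              \<bar>f x y - spice_density n K N x y\<bar> \<le> \<delta>)"
proof -
  let ?D = "unit_cube \<times> {0..1::real} :: ((real^'n) \<times> real) set"
  have cD: "compact ?D" by (intro compact_Times compact_unit_cube compact_Icc)
  obtain B where B: "B > 0" "\<And>x y. x \<in> unit_cube \<Longrightarrow> y \<in> {0..1} \<Longrightarrow> \<bar>f x y\<bar> \<le> B"
  proof -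
    obtain B where "B > 0" "\<forall>z \<in> (\<lambda>(x, y). f x y) ` ?D. norm z \<le> B"
      using compact_imp_bounded[OF compact_continuous_image[OF cont cD]] unfolding bounded_pos by auto
    then show ?thesis using that[of B] by force
  qed
  define \<eta> where "\<eta> = min (1/12) (\<epsilon> / (16 * (B + 1)))"
  have eta: "0 < \<eta>" "\<eta> \<le> 1/12" "\<eta> \<le> \<epsilon> / (16 * (B + 1))"
  proof -
    have "0 < \<epsilon> / (16 * (B + 1))" using eps B by (intro divide_pos_pos) auto
    then show "0 < \<eta>" unfolding \<eta>_def by simp
    show "\<eta> \<le> 1/12" "\<eta> \<le> \<epsilon> / (16 * (B + 1))" unfolding \<eta>_def by (rule min.cobounded1, rule min.cobounded2)
  qed
  have uc: "uniformly_continuous_on ?D (\<lambda>(x, y). f x y)"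
    by (rule compact_uniformly_continuous[OF cont cD])
  obtain d where d: "d > 0" "\<And>p q. p \<in> ?D \<Longrightarrow> q \<in> ?D \<Longrightarrow> dist q p < d \<Longrightarrow>
      dist ((\<lambda>(x, y). f x y) q) ((\<lambda>(x, y). f x y) p) < \<eta>"
    using uc eta(1) unfolding uniformly_continuous_on_def by metis
  obtain M :: nat where M: "M > 0" "inverse (real M) < d"
    using ex_inverse_of_nat_less[OF d(1)] by auto
  have M1: "M \<ge> 1" using M by simp
  have osc: "\<bar>f x y - f x y'\<bar> \<le> \<eta>"
    if x: "x \<in> unit_cube" and y: "y \<in> {0..1}" "y' \<in> {0..1}" "\<bar>y - y'\<bar> \<le> 1 / real M" for x y y'
  proof -
    have "dist (x, y) (x, y') < d" using y M by (simp add: dist_Pair_Pair dist_real_def divide_inverse)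
    then have "dist (f x y) (f x y') < \<eta>" using d(2)[of "(x, y')" "(x, y)"] x y by auto
    then show ?thesis by (simp add: dist_real_def)
  qed
  have ex: "\<exists>h. NF h \<and> (\<forall>x\<in>unit_cube. \<bar>f x (real g / real M) - h x\<bar> \<le> \<eta>)" if g: "g \<le> M" for g
  proof -
    have "continuous_on unit_cube (\<lambda>x. (\<lambda>(x, y). f x y) (x, real g / real M))"
    proof (rule continuous_on_compose2[OF cont])
      show "continuous_on unit_cube (\<lambda>x. (x, real g / real M))" by (intro continuous_intros)
      show "(\<lambda>x. (x, real g / real M)) ` unit_cube \<subseteq> ?D"
        using g M by (auto simp: divide_le_eq_1_pos)
    qed
    then have "continuous_on unit_cube (\<lambda>x. f x (real g / real M))" by simp
    then show ?thesis using NF_approx eta(1) by blast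
  qed
  obtain hs where hs: "\<And>g. g \<le> M \<Longrightarrow> NF (hs g)"
    "\<And>g x. g \<le> M \<Longrightarrow> x \<in> unit_cube \<Longrightarrow> \<bar>f x (real g / real M) - hs g x\<bar> \<le> \<eta>"
    using ex by metis
  define Hs where "Hs = (\<lambda>g x. relu (hs g x) + \<eta>)"
  have NFHs: "NF (Hs g)" if "g \<le> M" for g
    unfolding Hs_def using NF_scale[OF NF_relu[OF hs(1)[OF that]], of 1 \<eta>] by simp
  have Hspos: "Hs g x > 0" for g x unfolding Hs_def relu_def using eta by simp
  have Hsapp: "\<bar>Hs g x - f x (real g / real M)\<bar> \<le> 2 * \<eta>" if g: "g \<le> M" and x: "x \<in> unit_cube" for g x
  proof -
    have f0: "0 \<le> f x (real g / real M)" using nonneg x g M by (auto simp: divide_le_eq_1_pos)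
    have "\<bar>relu (hs g x) - f x (real g / real M)\<bar> \<le> \<eta>"
      using hs(2)[OF g x] f0 unfolding relu_def by linarith
    then show ?thesis unfolding Hs_def using eta by linarith
  qed
  define K where "K = Suc M"
  define p where "p = K + (K - 1) * 1 + 1"
  define F where "F = (\<lambda>j. if j < K then (\<lambda>x::real^'n. real j / real M) else Hs (j - K))"
  have "NFL p F"
  proof (rule NFL_of_NF)
    fix j assume "j < p"
    then show "NF (F j)" unfolding F_def p_def K_def using NFHs NF_const by auto
  qed
  then obtain N :: "'n network" where N: "\<And>x. nn_eval N x = map (\<lambda>j. F j x) [0..<p]"
    using netfun_of_NFL unfolding netfun_def by blast
  have out_t: "spice_knot K (nn_eval N x) i = real i / real M" if "i \<le> M" for x i
  proof -
    have "i < p" using that by (simp add: p_def K_def)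
    then show ?thesis using that unfolding spice_knot_def N by (simp add: K_def F_def del: upt_Suc)
  qed
  have out_H: "spice_height K (nn_eval N x) g = Hs g x" if "g \<le> M" for x g
  proof -
    have "K + g < p" using that by (simp add: p_def K_def)
    then show ?thesis using that unfolding spice_height_def N by (simp add: F_def del: upt_Suc)
  qed
  have net: "spice_net 1 K N"
    unfolding spice_net_def Let_def
  proof (intro conjI ballI allI impI)
    show "1 \<le> (1::nat)" by simp
    show "2 \<le> K" using M unfolding K_def by simp
    fix x :: "real^'n" assume x: "x \<in> unit_cube"
    show "length (nn_eval N x) = K + (K - 1) * 1 + 1" unfolding N p_def by simp
    show "spice_knot K (nn_eval N x) 0 = 0" using out_t[of 0 x] by simp
    show "spice_knot K (nn_eval N x) (K - 1) = 1" using out_t[of M x] M by (simp add: K_def)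
    fix i
    show "i < K - 1 \<Longrightarrow> spice_knot K (nn_eval N x) i \<le> spice_knot K (nn_eval N x) (Suc i)"
      using out_t[of i x] out_t[of "Suc i" x] M by (simp add: K_def divide_right_mono)
    show "i \<le> K - 1 \<Longrightarrow> 0 < spice_height K (nn_eval N x) (i * 1)"
      using out_H[of i x] Hspos by (simp add: K_def)
  qed
  have bound: "\<bar>f x y - spice_density 1 K N x y\<bar> \<le> 4 * \<eta> * (B + 1)"
    if x: "x \<in> unit_cube" and y: "y \<in> {0..1}" for x y
  proof -
    let ?t = "spice_knot K (nn_eval N x)" and ?H = "spice_height K (nn_eval N x)"
    have "\<bar>f x y - spice_unnorm 1 (Suc M) ?t ?H y / spice_normalizer 1 (Suc M) ?t ?H\<bar> \<le> 4 * \<eta> * (B + 1)"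
    proof (rule density_bound[where fx = "f x"])
      show "1 \<le> M" using M by simp
      show "\<And>i. i \<le> M \<Longrightarrow> ?t i = real i / real M" by (rule out_t)
      show "\<And>g. g \<le> M \<Longrightarrow> ?H g > 0" using out_H Hspos by simp
      show "\<And>g. g \<le> M \<Longrightarrow> \<bar>?H g - f x (real g / real M)\<bar> \<le> 2 * \<eta>" using out_H Hsapp x by simp
      show "\<And>y y'. y \<in> {0..1} \<Longrightarrow> y' \<in> {0..1} \<Longrightarrow> \<bar>y - y'\<bar> \<le> 1 / real M \<Longrightarrow> \<bar>f x y - f x y'\<bar> \<le> \<eta>"
        using osc x by blast
      show "(f x has_integral 1) {0..1}" using dens x by blast
      show "\<And>y. y \<in> {0..1} \<Longrightarrow> 0 \<le> f x y \<and> f x y \<le> B" using nonneg B(2) x by fastforce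
      show "0 < \<eta>" "\<eta> \<le> 1/12" using eta by auto
    qed (use y in auto)
    then show ?thesis unfolding spice_density_def Let_def K_def .
  qed
  have lt: "4 * \<eta> * (B + 1) < \<epsilon>"
  proof -
    have "4 * \<eta> * (B + 1) \<le> 4 * (\<epsilon> / (16 * (B + 1))) * (B + 1)"
      using eta B by (intro mult_right_mono mult_left_mono) auto
    also have "\<dots> = \<epsilon> / 4" using B by (simp add: field_simps)
    finally show ?thesis using eps by linarith
  qed
  show ?thesis using net bound lt by blast
qed

end
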